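(* Let $I\subseteq\mathbb{R}$ be an interval, $f:I\to\mathbb{R}$ differentiable on the interior $I^\circ$, and $a,b\in I^\circ$ with $a<b$, $f'\in L[a,b]$. Let $g:[a,b]\to\mathbb{R}$ be continuous and $\alpha>0$. If $|f'|$ is convex on $[a,b]$, then, with $m=\frac{a+b}{2}$, $$\left|f(m)\left[J^{\alpha}_{m-}g(a)+J^{\alpha}_{m+}g(b)\right]-\left[J^{\alpha}_{m-}(fg)(a)+J^{\alpha}_{m+}(fg)(b)\right]\right|\le \frac{(b-a)^{\alpha+1}\,\|g\|_{[a,b],\infty}}{2^{\alpha+1}(\alpha+1)\Gamma(\alpha+1)}\left(|f'(a)|+|f'(b)|\right).$$
   Context: For $\alpha>0$ and an integrable function $h$, the Riemann–Liouville fractional integrals are $J^{\alpha}_{c+}h(x)=\frac{1}{\Gamma(\alpha)}\int_c^x (x-t)^{\alpha-1}h(t)\,dt$ for $x>c$, and $J^{\alpha}_{c-}h(x)=\frac{1}{\Gamma(\alpha)}\int_x^c (t-x)^{\alpha-1}h(t)\,dt$ for $x<c$, where $\Gamma$ is the Gamma function. Thus, with $m=\frac{a+b}{2}$, $J^{\alpha}_{m-}h(a)=\frac{1}{\Gamma(\alpha)}\int_a^{m}(t-a)^{\alpha-1}h(t)\,dt$ and $J^{\alpha}_{m+}h(b)=\frac{1}{\Gamma(\alpha)}\int_{m}^{b}(b-t)^{\alpha-1}h(t)\,dt$. Here $fg$ denotes the pointwise product. For a continuous $g$ and an interval $[c,d]$, $\|g\|_{[c,d],\infty}=\sup_{x\in[c,d]}|g(x)|$.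 *)

theory Defs
  imports "HOL-Analysis.Analysis"
begin

text \<open>Left-sided Riemann--Liouville fractional integral J^alpha_{c-} h (x), for x < c.\<close>
definition RL_left :: "real \<Rightarrow> real \<Rightarrow> (real \<Rightarrow> real) \<Rightarrow> real \<Rightarrow> real" where
  "RL_left \<alpha> c h x = (1 / Gamma \<alpha>) * (LBINT t:{x..c}. (t - x) powr (\<alpha> - 1) * h t)"

text \<open>Right-sided Riemann--Liouville fractional integral J^alpha_{c+} h (x), for x > c.\<close>
definition RL_right :: "real \<Rightarrow> real \<Rightarrow> (real \<Rightarrow> real) \<Rightarrow> real \<Rightarrow> real" where
  "RL_right \<alpha> c h x = (1 / Gamma \<alpha>) * (LBINT t:{c..x}. (x - t) powr (\<alpha> - 1) * h t)"

definition sup_norm_on :: "real \<Rightarrow> real \<Rightarrow> (real \<Rightarrow> real) \<Rightarrow> real" where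
  "sup_norm_on c d g = (SUP x\<in>{c..d}. \<bar>g x\<bar>)"

end

theory Submission imports Defs begin

lemma powr_shift_lemmas:
  fixes u \<alpha> :: real assumes u: "u > 0"
  shows "u powr \<alpha> = u powr (\<alpha>-1) * u" "u powr (\<alpha>+1) = u powr (\<alpha>-1) * u^2"
        "u powr (\<alpha>+2) = u powr (\<alpha>-1) * u^3"
proof -
  have "u powr \<alpha> = u powr ((\<alpha>-1) + 1)" by simp
  also have "\<dots> = u powr (\<alpha>-1) * u powr 1" by (rule powr_add)
  finally show "u powr \<alpha> = u powr (\<alpha>-1) * u" using u by simp
  have "u powr (\<alpha>+1) = u powr ((\<alpha>-1) + 2)" by (simp add: algebra_simps)
  also have "\<dots> = u powr (\<alpha>-1) * u powr 2" by (rule powr_add)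
  finally show "u powr (\<alpha>+1) = u powr (\<alpha>-1) * u^2" using u by (simp add: powr_numeral)
  have "u powr (\<alpha>+2) = u powr ((\<alpha>-1) + 3)" by (simp add: algebra_simps)
  also have "\<dots> = u powr (\<alpha>-1) * u powr 3" by (rule powr_add)
  finally show "u powr (\<alpha>+2) = u powr (\<alpha>-1) * u^3" using u by (simp add: powr_numeral)
qed

lemma alg1: fixes A C D k \<alpha> u P :: real assumes a: "\<alpha> > 0"
 shows "D * (\<alpha> * P)/\<alpha> + A*k*(\<alpha> * P)/\<alpha> - A*((\<alpha>+1)*(P*u))/(\<alpha>+1)
      + C*k^2*(\<alpha> * P)/\<alpha> - C*((\<alpha>+2)*(P*u^2))/(\<alpha>+2)
      = P * (D + A*(k-u) + C*(k^2-u^2))"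
proof -
  have "\<alpha> \<noteq> 0" "\<alpha>+1 \<noteq> 0" "\<alpha>+2 \<noteq> 0" using a by auto
  then have "D * (\<alpha> * P)/\<alpha> = D*P" "A*k*(\<alpha> * P)/\<alpha> = A*k*P" "A*((\<alpha>+1)*(P*u))/(\<alpha>+1) = A*(P*u)"
     "C*k^2*(\<alpha> * P)/\<alpha> = C*k^2*P" "C*((\<alpha>+2)*(P*u^2))/(\<alpha>+2) = C*(P*u^2)" by simp_all
  then show ?thesis by (simp add: algebra_simps)
qed

lemma alg2:
  fixes A C D R P Q k \<alpha> :: real
  assumes "k * R = P" "k^2 * R = Q"
  shows "D*R/\<alpha> + A*k*R/\<alpha> - A*P/(\<alpha>+1) + C*k^2*R/\<alpha> - C*Q/(\<alpha>+2)
     = D*R/\<alpha> + A*(P/\<alpha> - P/(\<alpha>+1)) + C*(Q/\<alpha> - Q/(\<alpha>+2))"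
proof -
  show ?thesis unfolding assms[symmetric] by (simp add: algebra_simps diff_divide_distrib)
qed

lemma left_int:
  fixes p k \<alpha> A C D :: real
  assumes a: "\<alpha> > 0" and k: "k \<ge> 0"
  shows "((\<lambda>t. (t-p) powr (\<alpha>-1) * (D + A*(k-(t-p)) + C*(k^2-(t-p)^2))) has_integral
     (D * k powr \<alpha> / \<alpha> + A*(k powr (\<alpha>+1)/\<alpha> - k powr (\<alpha>+1)/(\<alpha>+1)) + C*(k powr (\<alpha>+2)/\<alpha> - k powr (\<alpha>+2)/(\<alpha>+2)))) {p..p+k}"
proof -
  define F where "F t = D * (t-p) powr \<alpha>/\<alpha> + A*k*(t-p) powr \<alpha>/\<alpha> - A*(t-p) powr (\<alpha>+1)/(\<alpha>+1)
      + C*k^2*(t-p) powr \<alpha>/\<alpha> - C*(t-p) powr (\<alpha>+2)/(\<alpha>+2)" for t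
  have cp: "continuous_on {p..p+k} (\<lambda>t. (t-p) powr e)" if "e>0" for e
    by (rule continuous_on_powr') (use that in \<open>auto intro!: continuous_intros\<close>)
  have c: "continuous_on {p..p+k} F"
    unfolding F_def
    by (intro continuous_on_add continuous_on_diff continuous_on_mult continuous_on_divide continuous_on_const cp) (use a in auto)
  have d: "(F has_vector_derivative (t-p) powr (\<alpha>-1) * (D + A*(k-(t-p)) + C*(k^2-(t-p)^2))) (at t)"
    if t: "t \<in> {p<..<p+k}" for t
  proof -
    have u: "t - p > 0" using t by auto
    have "(F has_real_derivative (D * (\<alpha> * (t-p) powr (\<alpha>-1))/\<alpha> + A*k*(\<alpha> * (t-p) powr (\<alpha>-1))/\<alpha> - A*((\<alpha>+1)*(t-p) powr (\<alpha>+1-1))/(\<alpha>+1)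
      + C*k^2*(\<alpha> * (t-p) powr (\<alpha>-1))/\<alpha> - C*((\<alpha>+2)*(t-p) powr (\<alpha>+2-1))/(\<alpha>+2))) (at t)"
      unfolding F_def using u a
      by (auto intro!: derivative_eq_intros)
    moreover have "(D * (\<alpha> * (t-p) powr (\<alpha>-1))/\<alpha> + A*k*(\<alpha> * (t-p) powr (\<alpha>-1))/\<alpha> - A*((\<alpha>+1)*(t-p) powr (\<alpha>+1-1))/(\<alpha>+1)
      + C*k^2*(\<alpha> * (t-p) powr (\<alpha>-1))/\<alpha> - C*((\<alpha>+2)*(t-p) powr (\<alpha>+2-1))/(\<alpha>+2))
      = (t-p) powr (\<alpha>-1) * (D + A*(k-(t-p)) + C*(k^2-(t-p)^2))"
    proof -
      have e1: "\<alpha>+1-1 = \<alpha>" "\<alpha>+2-1 = \<alpha>+1" by auto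
      show ?thesis unfolding e1 powr_shift_lemmas(1,2)[OF u, of \<alpha>]
        by (rule alg1[OF a])
    qed
    ultimately show ?thesis by (simp add: has_real_derivative_iff_has_vector_derivative)
  qed
  have FF: "F (p+k) - F p = D * k powr \<alpha> / \<alpha> + A*(k powr (\<alpha>+1)/\<alpha> - k powr (\<alpha>+1)/(\<alpha>+1)) + C*(k powr (\<alpha>+2)/\<alpha> - k powr (\<alpha>+2)/(\<alpha>+2))"
  proof -
    have "k * k powr \<alpha> = k powr (\<alpha>+1)" "k^2 * k powr \<alpha> = k powr (\<alpha>+2)"
      using k by (cases "k=0"; simp add: powr_add power2_eq_square)+
    then show ?thesis unfolding F_def using a by (simp add: alg2)
  qed
  have pk: "p \<le> p + k" using k by simp
  show ?thesis using fundamental_theorem_of_calculus_interior[OF pk c d] unfolding FF .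
qed

lemma right_int:
  fixes q k \<alpha> A C D :: real
  assumes a: "\<alpha> > 0" and k: "k \<ge> 0"
  shows "((\<lambda>t. (q-t) powr (\<alpha>-1) * (D + A*(k-(q-t)) + C*(k^2-(q-t)^2))) has_integral
     (D * k powr \<alpha> / \<alpha> + A*(k powr (\<alpha>+1)/\<alpha> - k powr (\<alpha>+1)/(\<alpha>+1)) + C*(k powr (\<alpha>+2)/\<alpha> - k powr (\<alpha>+2)/(\<alpha>+2)))) {q-k..q}"
proof -
  have "((\<lambda>t. (t-(-q)) powr (\<alpha>-1) * (D + A*(k-(t-(-q))) + C*(k^2-(t-(-q))^2))) has_integral
     (D * k powr \<alpha> / \<alpha> + A*(k powr (\<alpha>+1)/\<alpha> - k powr (\<alpha>+1)/(\<alpha>+1)) + C*(k powr (\<alpha>+2)/\<alpha> - k powr (\<alpha>+2)/(\<alpha>+2)))) {-q..-q+k}"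
    by (rule left_int[OF a k])
  then have "((\<lambda>x. (\<lambda>t. (t-(-q)) powr (\<alpha>-1) * (D + A*(k-(t-(-q))) + C*(k^2-(t-(-q))^2))) (-x)) has_integral
     (D * k powr \<alpha> / \<alpha> + A*(k powr (\<alpha>+1)/\<alpha> - k powr (\<alpha>+1)/(\<alpha>+1)) + C*(k powr (\<alpha>+2)/\<alpha> - k powr (\<alpha>+2)/(\<alpha>+2)))) {-(-q+k)..-(-q)}"
    by (subst has_integral_reflect_real)
  then show ?thesis by (simp add: algebra_simps)
qed

lemma lborel_prod:
  fixes w H :: "real \<Rightarrow> real"
  assumes wm: "w \<in> borel_measurable borel" and wi: "w absolutely_integrable_on {p..q}"
    and Hc: "continuous_on {p..q} H"
  shows "set_integrable lborel {p..q} (\<lambda>t. w t * H t)"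
proof -
  have "(\<lambda>t. H t * w t) absolutely_integrable_on {p..q}"
    by (rule absolutely_integrable_bounded_measurable_product_real[OF
          continuous_imp_measurable_on_sets_lebesgue[OF Hc]])
       (auto intro: wi compact_imp_bounded compact_continuous_image[OF Hc])
  hence 1: "set_integrable lebesgue {p..q} (\<lambda>t. w t * H t)" by (simp add: mult.commute)
  have "(\<lambda>x. w x * (indicator {p..q} x *\<^sub>R H x)) \<in> borel_measurable borel"
    using wm borel_measurable_continuous_on_indicator[OF _ Hc] by measurable
  hence m: "(\<lambda>x. indicator {p..q} x *\<^sub>R (w x * H x)) \<in> borel_measurable lborel"
    by (simp add: mult.left_commute)
  show ?thesis using 1 integrable_completion[OF m] unfolding set_integrable_def by simp
qed

lemma ftc_bound:
  fixes f f' l :: "real \<Rightarrow> real"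
  assumes "p \<le> q" "\<And>s. s \<in> {p..q} \<Longrightarrow> (f has_real_derivative f' s) (at s)"
    "\<And>s. s \<in> {p..q} \<Longrightarrow> \<bar>f' s\<bar> \<le> l s" "(l has_integral L) {p..q}"
  shows "\<bar>f q - f p\<bar> \<le> L"
proof -
  have "(f' has_integral (f q - f p)) {p..q}"
    by (rule fundamental_theorem_of_calculus[OF assms(1)])
       (use assms(2) in \<open>auto simp: has_real_derivative_iff_has_vector_derivative intro: has_vector_derivative_at_within\<close>)
  then show ?thesis using integral_norm_bound_integral[of f' "{p..q}" l] assms(3,4)
    by (auto simp: integrable_on_def integral_unique)
qed

lemma lin_int:
  fixes a h A B p q :: real
  assumes "p \<le> q" "h \<noteq> 0"
  shows "((\<lambda>s. A + (B-A)*(s-a)/h) has_integral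
     ((A*q + (B-A)*(q-a)^2/(2*h)) - (A*p + (B-A)*(p-a)^2/(2*h)))) {p..q}"
proof -
  have "((\<lambda>x. A * x + (B-A)*(x-a)^2/(2*h)) has_real_derivative (A + (B-A)*(y-a)/h)) (at y within {p..q})" for y
    using assms(2) by (auto intro!: derivative_eq_intros simp: field_simps)
  then show ?thesis
    by (intro fundamental_theorem_of_calculus[OF assms(1)])
       (simp add: has_real_derivative_iff_has_vector_derivative)
qed

lemma alg_helper:
  fixes G c x1 x2 y1 y2 :: real
  shows "c*((1/G)*x1 + (1/G)*x2) - ((1/G)*y1 + (1/G)*y2) = ((c*x1 - y1) + (c*x2 - y2))/G"
  by (simp add: diff_divide_distrib add_divide_distrib algebra_simps)

lemma V_helper:
  fixes A B P Q R h \<alpha> :: real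
  assumes al: "\<alpha> > 0"
  shows "0 * R/\<alpha> + A*(P/\<alpha> - P/(\<alpha>+1)) + (B-A)/(2*h)*(Q/\<alpha> - Q/(\<alpha>+2))
       + (0 * R/\<alpha> + B*(P/\<alpha> - P/(\<alpha>+1)) + (A-B)/(2*h)*(Q/\<alpha> - Q/(\<alpha>+2)))
       = (A+B)*P/(\<alpha>*(\<alpha>+1))"
proof -
  have e: "(A-B)/(2*h) = - ((B-A)/(2*h))" by (simp add: minus_divide_left)
  have e2: "P/\<alpha> - P/(\<alpha>+1) = P/(\<alpha>*(\<alpha>+1))" using al by (simp add: field_simps)
  show ?thesis unfolding e e2 by (simp add: algebra_simps add_divide_distrib)
qed

theorem theorem2p4:
  fixes I :: "real set" and f g :: "real \<Rightarrow> real" and a b \<alpha> :: real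
  assumes "is_interval I"
    and "\<forall>x\<in>interior I. f differentiable (at x)"
    and "a \<in> interior I" and "b \<in> interior I" and "a < b"
    and "set_integrable lborel {a..b} (deriv f)"
    and "continuous_on {a..b} g"
    and "\<alpha> > 0"
    and "convex_on {a..b} (\<lambda>x. \<bar>deriv f x\<bar>)"
  shows "\<bar>f ((a + b) / 2) * (RL_left \<alpha> ((a + b) / 2) g a + RL_right \<alpha> ((a + b) / 2) g b)
           - (RL_left \<alpha> ((a + b) / 2) (\<lambda>t. f t * g t) a + RL_right \<alpha> ((a + b) / 2) (\<lambda>t. f t * g t) b)\<bar>
         \<le> (b - a) powr (\<alpha> + 1) * sup_norm_on a b g
             / (2 powr (\<alpha> + 1) * (\<alpha> + 1) * Gamma (\<alpha> + 1))
             * (\<bar>deriv f a\<bar> + \<bar>deriv f b\<bar>)"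
proof -
  note assms' = assms
  define m where "m = (a+b)/2"
  define h where "h = b - a"
  define k where "k = h/2"
  define A where "A = \<bar>deriv f a\<bar>"
  define B where "B = \<bar>deriv f b\<bar>"
  define N where "N = sup_norm_on a b g"
  define C1 where "C1 = (B-A)/(2*h)"
  define C2 where "C2 = (A-B)/(2*h)"
  define V1 where "V1 = 0 * k powr \<alpha> / \<alpha> + A*(k powr (\<alpha>+1)/\<alpha> - k powr (\<alpha>+1)/(\<alpha>+1)) + C1*(k powr (\<alpha>+2)/\<alpha> - k powr (\<alpha>+2)/(\<alpha>+2))"
  define V2 where "V2 = 0 * k powr \<alpha> / \<alpha> + B*(k powr (\<alpha>+1)/\<alpha> - k powr (\<alpha>+1)/(\<alpha>+1)) + C2*(k powr (\<alpha>+2)/\<alpha> - k powr (\<alpha>+2)/(\<alpha>+2))"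
  have ab: "a < b" and al: "\<alpha> > 0" using assms by auto
  have hpos: "h > 0" and kpos: "k > 0" using ab by (auto simp: h_def k_def)
  have mk1: "m = a + k" and mk2: "m = b - k" by (simp_all add: m_def k_def h_def field_simps)
  have mab: "a \<le> m" "m \<le> b" using ab by (auto simp: m_def)
  have sub: "{a..b} \<subseteq> interior I"
  proof -
    have "convex (interior I)" using assms(1) by (simp add: is_interval_convex)
    then show ?thesis using assms(3,4) ab closed_segment_eq_real_ivl1[of a b]
      by (metis convex_contains_segment less_imp_le)
  qed
  have der: "\<And>x. x \<in> {a..b} \<Longrightarrow> (f has_real_derivative deriv f x) (at x)"
    using sub assms(2) by (auto simp: DERIV_deriv_iff_real_differentiable)
  have fcont: "continuous_on {a..b} f"
    using der by (meson DERIV_continuous continuous_at_imp_continuous_on)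
  have gcont: "continuous_on {a..b} g" using assms by simp
  have lconv: "\<bar>deriv f s\<bar> \<le> A + (B-A)*(s-a)/h" if s: "s \<in> {a..b}" for s
  proof -
    define t where "t = (s-a)/h"
    have t01: "0 \<le> t" "t \<le> 1" using s hpos by (auto simp: t_def h_def field_simps)
    have th: "t * h = s - a" using hpos by (simp add: t_def)
    have "(1 - t) *\<^sub>R a + t *\<^sub>R b = a + t * h" by (simp add: h_def algebra_simps)
    then have "(1 - t) *\<^sub>R a + t *\<^sub>R b = s" using th by simp
    with convex_onD[OF assms(9) t01, of a b] ab have "\<bar>deriv f s\<bar> \<le> (1-t)*A + t*B"
      by (simp add: A_def B_def)
    also have "\<dots> = A + (B-A)*(s-a)/h" using hpos by (simp add: t_def field_simps)
    finally show ?thesis .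
  qed
  define \<Lambda> where "\<Lambda> x = A*x + (B-A)*(x-a)^2/(2*h)" for x
  have fbound: "\<bar>f q - f p\<bar> \<le> \<Lambda> q - \<Lambda> p" if "a \<le> p" "p \<le> q" "q \<le> b" for p q
    using that lin_int[OF that(2), of h A B a] hpos
    by (intro ftc_bound[OF that(2), where f' = "deriv f" and l = "\<lambda>s. A + (B-A)*(s-a)/h"])
       (auto intro!: der lconv simp: \<Lambda>_def)
  have pw1: "\<bar>f m - f t\<bar> \<le> 0 + A*(k-(t-a)) + C1*(k^2-(t-a)^2)" if "t \<in> {a..m}" for t
  proof -
    have "\<Lambda> m - \<Lambda> t = 0 + A*(k-(t-a)) + C1*(k^2-(t-a)^2)"
      using hpos unfolding \<Lambda>_def C1_def mk1 by (simp add: field_simps power2_eq_square)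
    then show ?thesis using fbound[of t m] that mab by auto
  qed
  have pw2: "\<bar>f m - f t\<bar> \<le> 0 + B*(k-(b-t)) + C2*(k^2-(b-t)^2)" if "t \<in> {m..b}" for t
  proof -
    have hk: "h = 2*k" by (simp add: k_def)
    have r1: "\<Lambda> t - \<Lambda> m = A*(t-m) + (B-A)*((t-a)^2-(m-a)^2)/(2*h)"
      using hpos by (simp add: \<Lambda>_def field_simps)
    have r2: "t - a = (t - m) + k" "m - a = k" "b - t = k - (t - m)" using mk1 mk2 by auto
    have r3: "A*x + (B-A)*((x+k)^2-k^2)/(2*(2*k)) = 0 + B*(k-(k-x)) + (A-B)/(2*(2*k))*(k^2-(k-x)^2)" for x
      using kpos by (simp add: field_simps power2_eq_square)
    have "\<Lambda> t - \<Lambda> m = 0 + B*(k-(b-t)) + C2*(k^2-(b-t)^2)"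
      unfolding r1 r2 C2_def hk by (rule r3)
    then show ?thesis using fbound[of m t] that mab by (auto simp: abs_minus_commute)
  qed
  have bdd: "bdd_above ((\<lambda>x. \<bar>g x\<bar>) ` {a..b})"
    by (intro bounded_imp_bdd_above compact_imp_bounded compact_continuous_image continuous_intros gcont) auto
  have gb: "\<bar>g t\<bar> \<le> N" if "t \<in> {a..b}" for t
    unfolding N_def sup_norm_on_def using that bdd by (rule cSUP_upper)
  have N0: "N \<ge> 0" using gb[of a] ab by auto
  have I1: "((\<lambda>t. (t-a) powr (\<alpha>-1) * (0 + A*(k-(t-a)) + C1*(k^2-(t-a)^2))) has_integral V1) {a..m}"
    unfolding V1_def mk1 by (rule left_int[OF al]) (use kpos in auto)
  have I2: "((\<lambda>t. (b-t) powr (\<alpha>-1) * (0 + B*(k-(b-t)) + C2*(k^2-(b-t)^2))) has_integral V2) {m..b}"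
    unfolding V2_def mk2 by (rule right_int[OF al]) (use kpos in auto)
  have W1: "((\<lambda>t. (t-a) powr (\<alpha>-1) * (1 + 0*(k-(t-a)) + 0*(k^2-(t-a)^2))) has_integral
     (1 * k powr \<alpha> / \<alpha> + 0*(k powr (\<alpha>+1)/\<alpha> - k powr (\<alpha>+1)/(\<alpha>+1)) + 0*(k powr (\<alpha>+2)/\<alpha> - k powr (\<alpha>+2)/(\<alpha>+2)))) {a..m}"
    unfolding mk1 by (rule left_int[OF al]) (use kpos in auto)
  have W2: "((\<lambda>t. (b-t) powr (\<alpha>-1) * (1 + 0*(k-(b-t)) + 0*(k^2-(b-t)^2))) has_integral
     (1 * k powr \<alpha> / \<alpha> + 0*(k powr (\<alpha>+1)/\<alpha> - k powr (\<alpha>+1)/(\<alpha>+1)) + 0*(k powr (\<alpha>+2)/\<alpha> - k powr (\<alpha>+2)/(\<alpha>+2)))) {m..b}"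
    unfolding mk2 by (rule right_int[OF al]) (use kpos in auto)
  have w1a: "(\<lambda>t. (t-a) powr (\<alpha>-1)) absolutely_integrable_on {a..m}"
    using W1 by (intro nonnegative_absolutely_integrable_1) (auto simp: integrable_on_def)
  have w2a: "(\<lambda>t. (b-t) powr (\<alpha>-1)) absolutely_integrable_on {m..b}"
    using W2 by (intro nonnegative_absolutely_integrable_1) (auto simp: integrable_on_def)
  have w1m: "(\<lambda>t. (t-a) powr (\<alpha>-1)) \<in> borel_measurable borel" by measurable
  have w2m: "(\<lambda>t. (b-t) powr (\<alpha>-1)) \<in> borel_measurable borel" by measurable
  have sub1: "{a..m} \<subseteq> {a..b}" and sub2: "{m..b} \<subseteq> {a..b}" using mab by auto
  have gc1: "continuous_on {a..m} g" and gc2: "continuous_on {m..b} g"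
    using continuous_on_subset[OF gcont] sub1 sub2 by auto
  have fgc1: "continuous_on {a..m} (\<lambda>t. f t * g t)" and fgc2: "continuous_on {m..b} (\<lambda>t. f t * g t)"
    using continuous_on_subset[OF fcont] sub1 sub2 gc1 gc2 by (auto intro!: continuous_intros)
  have dc1: "continuous_on {a..m} (\<lambda>t. (f m - f t) * g t)" and dc2: "continuous_on {m..b} (\<lambda>t. (f m - f t) * g t)"
    using continuous_on_subset[OF fcont] sub1 sub2 gc1 gc2 by (auto intro!: continuous_intros)
  note L1g = set_borel_integral_eq_integral[OF lborel_prod[OF w1m w1a gc1]]
  note L2g = set_borel_integral_eq_integral[OF lborel_prod[OF w2m w2a gc2]]
  note L1fg = set_borel_integral_eq_integral[OF lborel_prod[OF w1m w1a fgc1]]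
  note L2fg = set_borel_integral_eq_integral[OF lborel_prod[OF w2m w2a fgc2]]
  note L1d = set_borel_integral_eq_integral[OF lborel_prod[OF w1m w1a dc1]]
  note L2d = set_borel_integral_eq_integral[OF lborel_prod[OF w2m w2a dc2]]
  define J1 where "J1 = integral {a..m} (\<lambda>t. (t-a) powr (\<alpha>-1) * ((f m - f t) * g t))"
  define J2 where "J2 = integral {m..b} (\<lambda>t. (b-t) powr (\<alpha>-1) * ((f m - f t) * g t))"
  have e1: "f m * integral {a..m} (\<lambda>t. (t-a) powr (\<alpha>-1) * g t) - integral {a..m} (\<lambda>t. (t-a) powr (\<alpha>-1) * (f t * g t)) = J1"
  proof -
    have "f m * integral {a..m} (\<lambda>t. (t-a) powr (\<alpha>-1) * g t) = integral {a..m} (\<lambda>t. f m * ((t-a) powr (\<alpha>-1) * g t))"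
      by simp
    then have "f m * integral {a..m} (\<lambda>t. (t-a) powr (\<alpha>-1) * g t) - integral {a..m} (\<lambda>t. (t-a) powr (\<alpha>-1) * (f t * g t))
       = integral {a..m} (\<lambda>t. f m * ((t-a) powr (\<alpha>-1) * g t) - (t-a) powr (\<alpha>-1) * (f t * g t))"
      by (subst integral_diff[OF integrable_on_mult_right[OF L1g(1)] L1fg(1)]) simp
    also have "\<dots> = J1" unfolding J1_def by (rule integral_cong) (simp add: algebra_simps)
    finally show ?thesis .
  qed
  have e2: "f m * integral {m..b} (\<lambda>t. (b-t) powr (\<alpha>-1) * g t) - integral {m..b} (\<lambda>t. (b-t) powr (\<alpha>-1) * (f t * g t)) = J2"
  proof -
    have "f m * integral {m..b} (\<lambda>t. (b-t) powr (\<alpha>-1) * g t) = integral {m..b} (\<lambda>t. f m * ((b-t) powr (\<alpha>-1) * g t))"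
      by simp
    then have "f m * integral {m..b} (\<lambda>t. (b-t) powr (\<alpha>-1) * g t) - integral {m..b} (\<lambda>t. (b-t) powr (\<alpha>-1) * (f t * g t))
       = integral {m..b} (\<lambda>t. f m * ((b-t) powr (\<alpha>-1) * g t) - (b-t) powr (\<alpha>-1) * (f t * g t))"
      by (subst integral_diff[OF integrable_on_mult_right[OF L2g(1)] L2fg(1)]) simp
    also have "\<dots> = J2" unfolding J2_def by (rule integral_cong) (simp add: algebra_simps)
    finally show ?thesis .
  qed
  have J1b: "\<bar>J1\<bar> \<le> N * V1"
  proof -
    have "norm J1 \<le> integral {a..m} (\<lambda>t. N * ((t-a) powr (\<alpha>-1) * (0 + A*(k-(t-a)) + C1*(k^2-(t-a)^2))))"
      unfolding J1_def
    proof (rule integral_norm_bound_integral)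
      show "(\<lambda>t. (t-a) powr (\<alpha>-1) * ((f m - f t) * g t)) integrable_on {a..m}" by (rule L1d(1))
      show "(\<lambda>t. N * ((t-a) powr (\<alpha>-1) * (0 + A*(k-(t-a)) + C1*(k^2-(t-a)^2)))) integrable_on {a..m}"
        using I1 by (intro integrable_on_mult_right) (auto simp: integrable_on_def)
      fix t assume t: "t \<in> {a..m}"
      have "norm ((t-a) powr (\<alpha>-1) * ((f m - f t) * g t)) = (t-a) powr (\<alpha>-1) * (\<bar>f m - f t\<bar> * \<bar>g t\<bar>)"
        by (simp add: abs_mult)
      also have "\<dots> \<le> (t-a) powr (\<alpha>-1) * ((0 + A*(k-(t-a)) + C1*(k^2-(t-a)^2)) * N)"
        using pw1[OF t] gb[of t] t sub1 by (intro mult_left_mono mult_mono) auto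
      finally show "norm ((t-a) powr (\<alpha>-1) * ((f m - f t) * g t)) \<le> N * ((t-a) powr (\<alpha>-1) * (0 + A*(k-(t-a)) + C1*(k^2-(t-a)^2)))"
        by (simp add: algebra_simps)
    qed
    also have "\<dots> = N * V1" using I1 by (simp add: integral_unique)
    finally show ?thesis by simp
  qed
  have J2b: "\<bar>J2\<bar> \<le> N * V2"
  proof -
    have "norm J2 \<le> integral {m..b} (\<lambda>t. N * ((b-t) powr (\<alpha>-1) * (0 + B*(k-(b-t)) + C2*(k^2-(b-t)^2))))"
      unfolding J2_def
    proof (rule integral_norm_bound_integral)
      show "(\<lambda>t. (b-t) powr (\<alpha>-1) * ((f m - f t) * g t)) integrable_on {m..b}" by (rule L2d(1))
      show "(\<lambda>t. N * ((b-t) powr (\<alpha>-1) * (0 + B*(k-(b-t)) + C2*(k^2-(b-t)^2)))) integrable_on {m..b}"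
        using I2 by (intro integrable_on_mult_right) (auto simp: integrable_on_def)
      fix t assume t: "t \<in> {m..b}"
      have "norm ((b-t) powr (\<alpha>-1) * ((f m - f t) * g t)) = (b-t) powr (\<alpha>-1) * (\<bar>f m - f t\<bar> * \<bar>g t\<bar>)"
        by (simp add: abs_mult)
      also have "\<dots> \<le> (b-t) powr (\<alpha>-1) * ((0 + B*(k-(b-t)) + C2*(k^2-(b-t)^2)) * N)"
        using pw2[OF t] gb[of t] t sub2 by (intro mult_left_mono mult_mono) auto
      finally show "norm ((b-t) powr (\<alpha>-1) * ((f m - f t) * g t)) \<le> N * ((b-t) powr (\<alpha>-1) * (0 + B*(k-(b-t)) + C2*(k^2-(b-t)^2)))"
        by (simp add: algebra_simps)
    qed
    also have "\<dots> = N * V2" using I2 by (simp add: integral_unique)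
    finally show ?thesis by simp
  qed
  have G: "Gamma \<alpha> > 0" using al by simp
  have lhs: "f m * (RL_left \<alpha> m g a + RL_right \<alpha> m g b) - (RL_left \<alpha> m (\<lambda>t. f t * g t) a + RL_right \<alpha> m (\<lambda>t. f t * g t) b)
      = (J1 + J2) / Gamma \<alpha>"
    unfolding RL_left_def RL_right_def L1g(2) L2g(2) L1fg(2) L2fg(2) e1[symmetric] e2[symmetric]
    by (rule alg_helper)
  have V: "V1 + V2 = (A+B) * k powr (\<alpha>+1) / (\<alpha> * (\<alpha>+1))"
    unfolding V1_def V2_def C1_def C2_def by (rule V_helper[OF al])
  have Gp: "Gamma (\<alpha>+1) = \<alpha> * Gamma \<alpha>"
    using al by (intro Gamma_plus1) (auto dest: nonpos_Ints_nonpos)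
  have kp: "(b - a) powr (\<alpha> + 1) / 2 powr (\<alpha> + 1) = k powr (\<alpha>+1)"
    unfolding k_def h_def by (simp add: powr_divide)
  have "\<bar>(J1 + J2) / Gamma \<alpha>\<bar> \<le> (N * V1 + N * V2) / Gamma \<alpha>"
    using J1b J2b G by (simp add: abs_le_iff divide_right_mono)
  also have "\<dots> = (b - a) powr (\<alpha> + 1) * N / (2 powr (\<alpha> + 1) * (\<alpha> + 1) * Gamma (\<alpha> + 1)) * (A + B)"
  proof -
    have "(b - a) powr (\<alpha> + 1) * N / (2 powr (\<alpha> + 1) * (\<alpha> + 1) * Gamma (\<alpha> + 1)) * (A + B)
        = ((b - a) powr (\<alpha> + 1) / 2 powr (\<alpha> + 1)) * N * (A+B) / ((\<alpha> + 1) * Gamma (\<alpha> + 1))"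
      by (simp add: field_simps)
    also have "\<dots> = N * (V1 + V2) / Gamma \<alpha>"
      unfolding kp V Gp using al G by (simp add: field_simps)
    finally show ?thesis by (simp add: algebra_simps)
  qed
  finally show ?thesis using lhs unfolding m_def N_def A_def B_def by simp
qed

end
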